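(* Let $V$ be a bounded, noncompact operator in a Hilbert space $H$, and let $V_{i,j}$ ($i,j=0,1,2,\dots$) be its matrix in some orthonormal basis of $H$, satisfying $$ \lim_{n\to\infty} V_{n,n+p}=0\quad\text{for every } p\in\mathbb{Z}. $$ Let $b=\{b_i\}_{i=-\infty}^{\infty}$ be an arbitrary sequence with $\sum_{i=-\infty}^{\infty}|b_i|^2<\infty$. Then the operator $K$ whose matrix in the same basis is $K_{i,j}=b_{i-j}V_{i,j}$ ($i,j=0,1,2,\dots$) is a compact operator on $H$. *)

theory Defs
  imports "HOL-Analysis.Analysis"
begin

text \<open>The Hilbert space H with orthonormal basis (e_i), i = 0,1,2,..., is identified
  (unitarily) with l2(N, C): vectors are coefficient sequences, operators are matrices
  A i j = <e_i, A e_j>.\<close>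

definition is_l2 :: "(nat \<Rightarrow> complex) \<Rightarrow> bool" where
  "is_l2 x \<longleftrightarrow> summable (\<lambda>i. (cmod (x i))^2)"

definition l2norm :: "(nat \<Rightarrow> complex) \<Rightarrow> real" where
  "l2norm x = sqrt (\<Sum>i. (cmod (x i))^2)"

definition mat_apply :: "(nat \<Rightarrow> nat \<Rightarrow> complex) \<Rightarrow> (nat \<Rightarrow> complex) \<Rightarrow> (nat \<Rightarrow> complex)" where
  "mat_apply A x = (\<lambda>i. \<Sum>j. A i j * x j)"

definition bounded_matrix :: "(nat \<Rightarrow> nat \<Rightarrow> complex) \<Rightarrow> bool" where
  "bounded_matrix A \<longleftrightarrow>
     (\<exists>C. \<forall>x. is_l2 x \<longrightarrow>
        (\<forall>i. summable (\<lambda>j. A i j * x j)) \<and> is_l2 (mat_apply A x) \<and>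
        l2norm (mat_apply A x) \<le> C * l2norm x)"

definition compact_matrix :: "(nat \<Rightarrow> nat \<Rightarrow> complex) \<Rightarrow> bool" where
  "compact_matrix A \<longleftrightarrow>
     (\<forall>x :: nat \<Rightarrow> nat \<Rightarrow> complex. (\<forall>n. is_l2 (x n)) \<and> (\<exists>M. \<forall>n. l2norm (x n) \<le> M) \<longrightarrow>
        (\<exists>r y. strict_mono r \<and> is_l2 y \<and>
           (\<lambda>n. l2norm (\<lambda>i. mat_apply A (x (r n)) i - y i)) \<longlonglongrightarrow> 0))"

end

theory Submission
  imports Defs "HOL-Library.Diagonal_Subsequence"
begin

lemma L2_partial_le:
  assumes "is_l2 x"
  shows "L2_set (\<lambda>i. cmod (x i)) {..<n} \<le> l2norm x"
proof -
  have "(\<Sum>i<n. (cmod (x i))^2) \<le> (\<Sum>i. (cmod (x i))^2)"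
    using assms unfolding is_l2_def by (intro sum_le_suminf) auto
  then show ?thesis unfolding L2_set_def l2norm_def by simp
qed

lemma L2_from_partial:
  assumes "B \<ge> 0" "\<And>n. L2_set (\<lambda>i. cmod (x i)) {..<n} \<le> B"
  shows "is_l2 x \<and> l2norm x \<le> B"
proof -
  have le: "(\<Sum>i<n. (cmod (x i))^2) \<le> B^2" for n
  proof -
    have "sqrt (\<Sum>i<n. (cmod (x i))^2) \<le> B" using assms(2)[of n] unfolding L2_set_def .
    then show ?thesis using assms(1) real_sqrt_le_iff by (metis real_sqrt_pow2 real_sqrt_le_mono sum_nonneg zero_le_power2 power_mono real_sqrt_ge_zero)
  qed
  have s: "summable (\<lambda>i. (cmod (x i))^2)"
    by (rule summableI_nonneg_bounded[where x="B^2"]) (use le in auto)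
  have "(\<Sum>i. (cmod (x i))^2) \<le> B^2"
    by (rule suminf_le_const[OF s]) (use le in auto)
  then have "sqrt (\<Sum>i. (cmod (x i))^2) \<le> B" using assms(1) real_le_lsqrt by auto
  with s show ?thesis unfolding is_l2_def l2norm_def by auto
qed


definition ee :: "nat \<Rightarrow> nat \<Rightarrow> int \<Rightarrow> complex" where
  "ee N k m = cis (2 * pi * real k * of_int m / real N)"

lemma ee_mult: "ee N k a * ee N k b = ee N k (a + b)"
  unfolding ee_def by (simp add: cis_mult algebra_simps add_divide_distrib)

lemma ee_cnj: "cnj (ee N k a) = ee N k (- a)"
  unfolding ee_def by (simp add: cis_cnj)

lemma ee_norm[simp]: "cmod (ee N k a) = 1"
  unfolding ee_def by simp

lemma ee_zero[simp]: "ee N k 0 = 1"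
  unfolding ee_def by simp

lemma orth:
  fixes N :: nat and m :: int
  assumes "N > 0" "\<bar>m\<bar> < int N"
  shows "(\<Sum>k<N. ee N k m) = (if m = 0 then of_nat N else 0)"
proof (cases "m = 0")
  case True then show ?thesis by simp
next
  case False
  define z where "z = cis (2 * pi * of_int m / real N)"
  have zk: "ee N k m = z ^ k" for k
  proof -
    have "z ^ k = cis (real k * (2 * pi * of_int m / real N))" unfolding z_def by (rule Complex.DeMoivre)
    then show ?thesis unfolding ee_def by (simp add: algebra_simps)
  qed
  have "z \<noteq> 1"
  proof
    assume "z = 1"
    then have "cos (2 * pi * of_int m / real N) = 1" unfolding z_def
      by (metis cis.sel(1) one_complex.sel(1))
    then obtain j :: int where j: "2 * pi * of_int m / real N = of_int j * 2 * pi"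
      using cos_one_2pi_int by blast
    then have "real_of_int m = real_of_int j * real N" using assms(1)
      by (simp add: field_simps)
    then have "real_of_int m = real_of_int (j * int N)" by simp
    then have mj: "m = j * int N" by (simp only: of_int_eq_iff)
    with False have "j \<noteq> 0" by auto
    then have "1 \<le> \<bar>j\<bar>" by simp
    then have "1 * int N \<le> \<bar>j\<bar> * int N" by (rule mult_right_mono) simp
    then have "int N \<le> \<bar>m\<bar>" using mj by (simp add: abs_mult)
    with assms(2) show False by simp
  qed
  have zN: "z ^ N = 1"
  proof -
    have "z ^ N = cis (real N * (2 * pi * of_int m / real N))" unfolding z_def by (rule Complex.DeMoivre)
    also have "\<dots> = cis (2 * pi * of_int m)" using assms(1) by simp
    also have "\<dots> = 1" by (rule cis_multiple_2pi) simp
    finally show ?thesis .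
  qed
  have "(\<Sum>k<N. ee N k m) = (\<Sum>k<N. z ^ k)" by (simp add: zk)
  also have "\<dots> = (1 - z ^ N) / (1 - z)" using \<open>z \<noteq> 1\<close> by (simp add: sum_gp_strict)
  also have "\<dots> = 0" using zN by simp
  finally show ?thesis using False by simp
qed

lemma ee_prod: "ee N k (int j) * cnj (ee N k (int i)) = ee N k (int j - int i)"
  by (simp add: ee_cnj ee_mult)

lemma fin_mult:
  fixes V :: "nat \<Rightarrow> nat \<Rightarrow> complex" and c :: "int \<Rightarrow> complex"
  assumes C: "C \<ge> 0"
    and Vp: "\<And>x y. cmod (\<Sum>i<n. \<Sum>j<n. V i j * x j * cnj (y i))
               \<le> C * L2_set (\<lambda>j. cmod (x j)) {..<n} * L2_set (\<lambda>i. cmod (y i)) {..<n}"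
    and B: "B \<ge> 0" "\<And>F. finite F \<Longrightarrow> (\<Sum>p\<in>F. (cmod (c p))^2) \<le> B^2"
  shows "cmod (\<Sum>i<n. \<Sum>j<n. c (int i - int j) * V i j * x j * cnj (y i))
          \<le> C * B * L2_set (\<lambda>j. cmod (x j)) {..<n} * L2_set (\<lambda>i. cmod (y i)) {..<n}"
proof (cases "n = 0")
  case True then show ?thesis by simp
next
  case False
  define N where "N = 2 * n"
  have N0: "N > 0" using False N_def by simp
  define P where "P = {- int n + 1 .. int n - 1}"
  have finP: "finite P" unfolding P_def by simp
  define f where "f k = (\<Sum>p\<in>P. c p * ee N k p)" for k
  define X where "X = L2_set (\<lambda>j. cmod (x j)) {..<n}"
  define Y where "Y = L2_set (\<lambda>i. cmod (y i)) {..<n}"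
  have inP: "int i - int j \<in> P" if "i < n" "j < n" for i j using that unfolding P_def by auto
  have diffP: "\<bar>p - q\<bar> < int N" if "p \<in> P" "q \<in> P" for p q using that unfolding P_def N_def by auto
  have step1: "c d = (1 / of_nat N) * (\<Sum>k<N. f k * ee N k (- d))" if "d \<in> P" for d
  proof -
    have "(\<Sum>k<N. f k * ee N k (- d)) = (\<Sum>k<N. \<Sum>p\<in>P. c p * ee N k (p - d))"
      unfolding f_def by (simp add: sum_distrib_right mult.assoc ee_mult)
    also have "\<dots> = (\<Sum>p\<in>P. c p * (\<Sum>k<N. ee N k (p - d)))"
      by (simp add: sum_distrib_left sum.swap[of _ "{..<N}"])
    also have "\<dots> = (\<Sum>p\<in>P. (if p = d then c p * of_nat N else 0))"
      using orth[OF N0] diffP[OF _ that] by (intro sum.cong refl) simp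
    also have "\<dots> = c d * of_nat N" using that finP by (simp add: sum.delta')
    finally show ?thesis using N0 by simp
  qed
  define T where "T k = (\<Sum>i<n. \<Sum>j<n. V i j * (x j * ee N k (int j)) * cnj (y i * ee N k (int i)))" for k
  have trm: "c (int i - int j) * V i j * x j * cnj (y i) =
      (\<Sum>k<N. (1 / of_nat N) * f k * (V i j * (x j * ee N k (int j)) * cnj (y i * ee N k (int i))))"
    if "i < n" "j < n" for i j
    unfolding step1[OF inP[OF that]]
    by (simp add: sum_distrib_left sum_distrib_right ee_prod mult_ac)
  have S: "(\<Sum>i<n. \<Sum>j<n. c (int i - int j) * V i j * x j * cnj (y i))
        = (\<Sum>k<N. ((1 / of_nat N) * f k) * T k)"
  proof -
    have "(\<Sum>i<n. \<Sum>j<n. c (int i - int j) * V i j * x j * cnj (y i))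
        = (\<Sum>i<n. \<Sum>j<n. \<Sum>k<N. (1 / of_nat N) * f k * (V i j * (x j * ee N k (int j)) * cnj (y i * ee N k (int i))))"
      using trm by (intro sum.cong refl) auto
    also have "\<dots> = (\<Sum>k<N. \<Sum>i<n. \<Sum>j<n. (1 / of_nat N) * f k * (V i j * (x j * ee N k (int j)) * cnj (y i * ee N k (int i))))"
      by (subst sum.swap) (simp add: sum.swap[of _ "{..<N}"])
    also have "\<dots> = (\<Sum>k<N. ((1 / of_nat N) * f k) * T k)"
      unfolding T_def by (simp add: sum_distrib_left mult.assoc)
    finally show ?thesis .
  qed
  have Tb: "cmod (T k) \<le> C * X * Y" for k
  proof -
    have "cmod (T k) \<le> C * L2_set (\<lambda>j. cmod (x j * ee N k (int j))) {..<n} * L2_set (\<lambda>i. cmod (y i * ee N k (int i))) {..<n}"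
      unfolding T_def by (rule Vp)
    then show ?thesis unfolding X_def Y_def by (simp add: norm_mult)
  qed
  have XY: "X \<ge> 0" "Y \<ge> 0" unfolding X_def Y_def by auto
  have S2: "cmod (\<Sum>i<n. \<Sum>j<n. c (int i - int j) * V i j * x j * cnj (y i))
      \<le> (1 / real N) * (\<Sum>k<N. cmod (f k)) * (C * X * Y)"
  proof -
    have "cmod (\<Sum>k<N. ((1 / of_nat N) * f k) * T k) \<le> (\<Sum>k<N. cmod (((1 / of_nat N) * f k) * T k))"
      by (rule norm_sum)
    also have "\<dots> \<le> (\<Sum>k<N. (1 / real N) * cmod (f k) * (C * X * Y))"
    proof (intro sum_mono)
      fix k
      have "cmod (((1 / of_nat N) * f k) * T k) = (1 / real N) * cmod (f k) * cmod (T k)"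
        by (simp add: norm_mult norm_divide)
      also have "\<dots> \<le> (1 / real N) * cmod (f k) * (C * X * Y)"
        by (intro mult_left_mono Tb) auto
      finally show "cmod (((1 / of_nat N) * f k) * T k) \<le> (1 / real N) * cmod (f k) * (C * X * Y)" .
    qed
    also have "\<dots> = (1 / real N) * (\<Sum>k<N. cmod (f k)) * (C * X * Y)"
      by (simp add: sum_distrib_left sum_distrib_right)
    finally show ?thesis using S by simp
  qed
  have pars: "(\<Sum>k<N. (cmod (f k))^2) = real N * (\<Sum>p\<in>P. (cmod (c p))^2)"
  proof -
    have "complex_of_real (\<Sum>k<N. (cmod (f k))^2) = (\<Sum>k<N. f k * cnj (f k))"
      by (simp only: of_real_sum complex_norm_square)
    also have "\<dots> = (\<Sum>k<N. \<Sum>q\<in>P. \<Sum>p\<in>P. c p * cnj (c q) * ee N k (p - q))"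
      unfolding f_def
      by (simp add: sum_distrib_left sum_distrib_right ee_cnj ee_mult mult_ac)
    also have "\<dots> = (\<Sum>q\<in>P. \<Sum>p\<in>P. c p * cnj (c q) * (\<Sum>k<N. ee N k (p - q)))"
      by (simp add: sum_distrib_left sum.swap[of _ "{..<N}"])
    also have "\<dots> = (\<Sum>q\<in>P. \<Sum>p\<in>P. (if p = q then c p * cnj (c q) * of_nat N else 0))"
      using orth[OF N0] diffP by (intro sum.cong refl) auto
    also have "\<dots> = (\<Sum>q\<in>P. c q * cnj (c q) * of_nat N)"
      using finP by (simp add: sum.delta')
    also have "\<dots> = complex_of_real (real N * (\<Sum>p\<in>P. (cmod (c p))^2))"
      by (simp only: of_real_mult of_real_sum of_real_of_nat_eq complex_norm_square sum_distrib_left mult_ac)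
    finally show ?thesis by (simp only: of_real_eq_iff)
  qed
  have sumf: "(\<Sum>k<N. cmod (f k)) \<le> real N * B"
  proof -
    have "(\<Sum>k<N. \<bar>1\<bar> * \<bar>cmod (f k)\<bar>) \<le> L2_set (\<lambda>_. 1) {..<N} * L2_set (\<lambda>k. cmod (f k)) {..<N}"
      by (rule L2_set_mult_ineq)
    then have "(\<Sum>k<N. cmod (f k)) \<le> sqrt (real N) * sqrt (real N * (\<Sum>p\<in>P. (cmod (c p))^2))"
      by (simp add: L2_set_constant L2_set_def pars)
    also have "\<dots> \<le> sqrt (real N) * sqrt (real N * B^2)"
      using B(2)[OF finP] by (intro mult_left_mono real_sqrt_le_mono) auto
    also have "\<dots> = real N * B" using B(1)
      by (simp add: real_sqrt_mult)
    finally show ?thesis .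
  qed
  have "(1 / real N) * (\<Sum>k<N. cmod (f k)) * (C * X * Y) \<le> (1 / real N) * (real N * B) * (C * X * Y)"
    using sumf C XY by (intro mult_right_mono mult_left_mono) auto
  also have "\<dots> = C * B * X * Y" using N0 by simp
  finally show ?thesis using S2 unfolding X_def Y_def by simp
qed

lemma l2norm_nonneg: "is_l2 x \<Longrightarrow> l2norm x \<ge> 0"
  unfolding l2norm_def is_l2_def by (simp add: suminf_nonneg)

lemma coord_le_l2norm:
  assumes "is_l2 z" shows "cmod (z i) \<le> l2norm z"
proof -
  have "cmod (z i) \<le> L2_set (\<lambda>i. cmod (z i)) {..<Suc i}"
    by (rule member_le_L2_set) auto
  also have "\<dots> \<le> l2norm z" by (rule L2_partial_le[OF assms])
  finally show ?thesis .
qed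

definition trunc :: "nat \<Rightarrow> (nat \<Rightarrow> complex) \<Rightarrow> nat \<Rightarrow> complex" where
  "trunc m u = (\<lambda>j. if j < m then u j else 0)"

lemma trunc_summable: "summable (\<lambda>j. f j * trunc m u j)"
  by (rule summable_finite[of "{..<m}"]) (auto simp: trunc_def)

lemma trunc_l2: "is_l2 (trunc m u)"
  unfolding is_l2_def by (rule summable_finite[of "{..<m}"]) (auto simp: trunc_def)

lemma trunc_l2norm: "l2norm (trunc m u) = L2_set (\<lambda>j. cmod (u j)) {..<m}"
proof -
  have "(\<Sum>j. (cmod (trunc m u j))^2) = (\<Sum>j<m. (cmod (trunc m u j))^2)"
    by (rule suminf_finite) (auto simp: trunc_def)
  also have "\<dots> = (\<Sum>j<m. (cmod (u j))^2)" by (simp add: trunc_def)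
  finally show ?thesis unfolding l2norm_def L2_set_def by simp
qed

lemma trunc_apply: "mat_apply A (trunc m u) i = (\<Sum>j<m. A i j * u j)"
proof -
  have "(\<Sum>j. A i j * trunc m u j) = (\<Sum>j<m. A i j * trunc m u j)"
    by (rule suminf_finite) (auto simp: trunc_def)
  then show ?thesis unfolding mat_apply_def by (simp add: trunc_def)
qed

lemma trunc_L2:
  assumes "n \<le> m"
  shows "L2_set (\<lambda>i. cmod (trunc n w i)) {..<m} = L2_set (\<lambda>i. cmod (w i)) {..<n}"
proof -
  have "(\<Sum>i<m. (cmod (trunc n w i))^2) = (\<Sum>i<n. (cmod (trunc n w i))^2)"
    using assms by (intro sum.mono_neutral_right) (auto simp: trunc_def)
  also have "\<dots> = (\<Sum>i<n. (cmod (w i))^2)" by (simp add: trunc_def)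
  finally show ?thesis unfolding L2_set_def by simp
qed

lemma C_nonneg:
  assumes HV: "\<forall>x. is_l2 x \<longrightarrow> (\<forall>i. summable (\<lambda>j. V i j * x j)) \<and> is_l2 (mat_apply V x) \<and>
        l2norm (mat_apply V x) \<le> C * l2norm x"
  shows "C \<ge> 0"
proof -
  define u where "u = trunc 1 (\<lambda>_. 1)"
  have "l2norm (mat_apply V u) \<le> C * l2norm u" using HV trunc_l2 unfolding u_def by blast
  moreover have "l2norm u = 1" unfolding u_def trunc_l2norm by (simp add: L2_set_def)
  moreover have "l2norm (mat_apply V u) \<ge> 0" using HV trunc_l2 l2norm_nonneg unfolding u_def by blast
  ultimately show ?thesis by simp
qed

lemma pair_bound:
  assumes HV: "\<forall>x. is_l2 x \<longrightarrow> (\<forall>i. summable (\<lambda>j. V i j * x j)) \<and> is_l2 (mat_apply V x) \<and>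
        l2norm (mat_apply V x) \<le> C * l2norm x"
  shows "cmod (\<Sum>i<n. \<Sum>j<n. V i j * x j * cnj (y i))
               \<le> C * L2_set (\<lambda>j. cmod (x j)) {..<n} * L2_set (\<lambda>i. cmod (y i)) {..<n}"
proof -
  have C: "C \<ge> 0" by (rule C_nonneg[OF HV])
  define w where "w = mat_apply V (trunc n x)"
  have wl2: "is_l2 w" "l2norm w \<le> C * l2norm (trunc n x)" using HV trunc_l2 unfolding w_def by blast+
  have "(\<Sum>i<n. \<Sum>j<n. V i j * x j * cnj (y i)) = (\<Sum>i<n. w i * cnj (y i))"
    unfolding w_def trunc_apply by (simp add: sum_distrib_right)
  then have "cmod (\<Sum>i<n. \<Sum>j<n. V i j * x j * cnj (y i)) \<le> (\<Sum>i<n. \<bar>cmod (w i)\<bar> * \<bar>cmod (y i)\<bar>)"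
    by (metis (no_types, lifting) abs_norm_cancel complex_mod_cnj norm_mult norm_sum sum.cong)
  also have "\<dots> \<le> L2_set (\<lambda>i. cmod (w i)) {..<n} * L2_set (\<lambda>i. cmod (y i)) {..<n}"
    by (rule L2_set_mult_ineq)
  also have "\<dots> \<le> (C * L2_set (\<lambda>j. cmod (x j)) {..<n}) * L2_set (\<lambda>i. cmod (y i)) {..<n}"
  proof (rule mult_right_mono)
    show "L2_set (\<lambda>i. cmod (w i)) {..<n} \<le> C * L2_set (\<lambda>j. cmod (x j)) {..<n}"
      using L2_partial_le[OF wl2(1)] wl2(2) unfolding trunc_l2norm by (meson order_trans)
  qed simp
  finally show ?thesis by simp
qed

lemma mult_bounded:
  fixes V :: "nat \<Rightarrow> nat \<Rightarrow> complex" and c :: "int \<Rightarrow> complex"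
  assumes HV: "\<forall>x. is_l2 x \<longrightarrow> (\<forall>i. summable (\<lambda>j. V i j * x j)) \<and> is_l2 (mat_apply V x) \<and>
        l2norm (mat_apply V x) \<le> C * l2norm x"
    and B: "B \<ge> 0" "\<And>F. finite F \<Longrightarrow> (\<Sum>p\<in>F. (cmod (c p))^2) \<le> B^2"
    and x: "is_l2 x"
  shows "(\<forall>i. summable (\<lambda>j. c (int i - int j) * V i j * x j)) \<and>
         is_l2 (mat_apply (\<lambda>i j. c (int i - int j) * V i j) x) \<and>
         l2norm (mat_apply (\<lambda>i j. c (int i - int j) * V i j) x) \<le> C * B * l2norm x"
proof -
  have C: "C \<ge> 0" by (rule C_nonneg[OF HV])
  have pairW: "cmod (\<Sum>i<n. \<Sum>j<n. c (int i - int j) * V i j * u j * cnj (y i))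
          \<le> C * B * L2_set (\<lambda>j. cmod (u j)) {..<n} * L2_set (\<lambda>i. cmod (y i)) {..<n}" for n u y
    by (rule fin_mult[OF C _ B]) (rule pair_bound[OF HV])
  have cb: "cmod (c p) \<le> B" for p
  proof -
    have "(cmod (c p))^2 \<le> B^2" using B(2)[of "{p}"] by simp
    then show ?thesis using B(1) by (rule power2_le_imp_le)
  qed
  have row: "L2_set (\<lambda>j. cmod (V i j)) {..<m} \<le> C" for i m
  proof -
    define u where "u = trunc m (\<lambda>j. cnj (V i j))"
    define s where "s = L2_set (\<lambda>j. cmod (V i j)) {..<m}"
    have "mat_apply V u i = (\<Sum>j<m. V i j * cnj (V i j))" unfolding u_def trunc_apply ..
    also have "\<dots> = of_real (\<Sum>j<m. (cmod (V i j))^2)"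
      by (simp only: of_real_sum complex_norm_square)
    also have "(\<Sum>j<m. (cmod (V i j))^2) = s^2" unfolding s_def L2_set_def
      by (simp add: sum_nonneg)
    finally have e: "mat_apply V u i = of_real (s^2)" .
    have "cmod (mat_apply V u i) \<le> l2norm (mat_apply V u)"
      using HV trunc_l2 coord_le_l2norm unfolding u_def by blast
    also have "\<dots> \<le> C * l2norm u" using HV trunc_l2 unfolding u_def by blast
    also have "l2norm u = s" unfolding u_def s_def trunc_l2norm by simp
    finally have "s^2 \<le> C * s" using e by (simp add: norm_power)
    moreover have "s \<ge> 0" unfolding s_def by simp
    ultimately show ?thesis unfolding s_def[symmetric] using C
      by (cases "s = 0") (auto simp: power2_eq_square)
  qed
  have summ: "summable (\<lambda>j. c (int i - int j) * V i j * x j)" for i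
  proof -
    have b: "(\<Sum>j<m. cmod (V i j) * cmod (x j)) \<le> C * l2norm x" for m
    proof -
      have "(\<Sum>j<m. cmod (V i j) * cmod (x j)) = (\<Sum>j<m. \<bar>cmod (V i j)\<bar> * \<bar>cmod (x j)\<bar>)" by simp
      also have "\<dots> \<le> L2_set (\<lambda>j. cmod (V i j)) {..<m} * L2_set (\<lambda>j. cmod (x j)) {..<m}"
        by (rule L2_set_mult_ineq)
      also have "\<dots> \<le> C * l2norm x"
        by (intro mult_mono row L2_partial_le x C) auto
      finally show ?thesis .
    qed
    have s1: "summable (\<lambda>j. cmod (V i j) * cmod (x j))"
      by (rule summableI_nonneg_bounded[where x="C * l2norm x"]) (use b in auto)
    have s2: "summable (\<lambda>j. B * (cmod (V i j) * cmod (x j)))"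
      using s1 by (rule summable_mult)
    show ?thesis
    proof (rule summable_comparison_test[OF _ s2])
      show "\<exists>N. \<forall>n\<ge>N. norm (c (int i - int n) * V i n * x n) \<le> B * (cmod (V i n) * cmod (x n))"
        using cb by (auto simp: norm_mult mult.assoc intro!: mult_right_mono)
    qed
  qed
  define w where "w = mat_apply (\<lambda>i j. c (int i - int j) * V i j) x"
  have wdef: "w i = (\<Sum>j. c (int i - int j) * V i j * x j)" for i
    unfolding w_def mat_apply_def by simp
  have part: "L2_set (\<lambda>i. cmod (w i)) {..<n} \<le> C * B * l2norm x" for n
  proof -
    define L where "L = L2_set (\<lambda>i. cmod (w i)) {..<n}"
    define y where "y = trunc n w"
    define A where "A = (\<Sum>i<n. w i * cnj (w i))"
    have AL: "cmod A = L^2" unfolding A_def L_def L2_set_def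
    proof -
      have "(\<Sum>i<n. w i * cnj (w i)) = of_real (\<Sum>i<n. (cmod (w i))^2)"
        by (simp only: of_real_sum complex_norm_square)
      then have "cmod (\<Sum>i<n. w i * cnj (w i)) = (\<Sum>i<n. (cmod (w i))\<^sup>2)"
        by (metis (no_types, lifting) abs_of_nonneg norm_of_real sum_nonneg zero_le_power2)
      then show "cmod (\<Sum>i<n. w i * cnj (w i)) = (sqrt (\<Sum>i<n. (cmod (w i))\<^sup>2))\<^sup>2"
        by (simp add: sum_nonneg)
    qed
    have lim: "(\<lambda>m. \<Sum>i<n. (\<Sum>j<m. c (int i - int j) * V i j * x j) * cnj (w i)) \<longlonglongrightarrow> A"
      unfolding A_def
      by (intro tendsto_intros) (simp add: wdef summable_LIMSEQ summ)
    have ev: "\<forall>\<^sub>F m in sequentially. cmod (\<Sum>i<n. (\<Sum>j<m. c (int i - int j) * V i j * x j) * cnj (w i))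
                \<le> C * B * l2norm x * L"
    proof (rule eventually_sequentiallyI[of n])
      fix m assume "n \<le> m"
      have "(\<Sum>i<n. (\<Sum>j<m. c (int i - int j) * V i j * x j) * cnj (w i))
          = (\<Sum>i<m. \<Sum>j<m. c (int i - int j) * V i j * x j * cnj (y i))"
      proof -
        have "(\<Sum>i<m. \<Sum>j<m. c (int i - int j) * V i j * x j * cnj (y i))
            = (\<Sum>i<n. \<Sum>j<m. c (int i - int j) * V i j * x j * cnj (y i))"
          using \<open>n \<le> m\<close> by (intro sum.mono_neutral_right) (auto simp: y_def trunc_def)
        also have "\<dots> = (\<Sum>i<n. (\<Sum>j<m. c (int i - int j) * V i j * x j) * cnj (w i))"
          by (intro sum.cong refl) (auto simp: y_def trunc_def sum_distrib_right)
        finally show ?thesis by simp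
      qed
      also have "cmod \<dots> \<le> C * B * L2_set (\<lambda>j. cmod (x j)) {..<m} * L2_set (\<lambda>i. cmod (y i)) {..<m}"
        by (rule pairW)
      also have "L2_set (\<lambda>i. cmod (y i)) {..<m} = L"
      proof -
        show ?thesis unfolding y_def L_def using \<open>n \<le> m\<close> by (rule trunc_L2)
      qed
      also have "C * B * L2_set (\<lambda>j. cmod (x j)) {..<m} * L \<le> C * B * l2norm x * L"
        using C B(1) by (intro mult_right_mono mult_left_mono L2_partial_le x) (auto simp: L_def)
      finally show "cmod (\<Sum>i<n. (\<Sum>j<m. c (int i - int j) * V i j * x j) * cnj (w i))
                \<le> C * B * l2norm x * L" .
    qed
    have "cmod A \<le> C * B * l2norm x * L"
      by (rule tendsto_upperbound[OF tendsto_norm[OF lim] ev]) simp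
    then have "L^2 \<le> (C * B * l2norm x) * L" using AL by simp
    moreover have "L \<ge> 0" unfolding L_def by simp
    moreover have "C * B * l2norm x \<ge> 0" using C B(1) l2norm_nonneg[OF x] by simp
    ultimately show ?thesis unfolding L_def[symmetric]
      by (cases "L = 0") (auto simp: power2_eq_square)
  qed
  have "is_l2 w \<and> l2norm w \<le> C * B * l2norm x"
    by (rule L2_from_partial[OF _ part]) (use C B(1) l2norm_nonneg[OF x] in simp)
  with summ show ?thesis unfolding w_def by simp
qed

lemma tail:
  fixes b :: "int \<Rightarrow> complex"
  assumes sb: "(\<lambda>i. (cmod (b i))^2) summable_on UNIV" and e: "\<epsilon> > 0"
  shows "\<exists>N::nat. \<forall>F. finite F \<longrightarrow> (\<Sum>p\<in>F. (cmod (if \<bar>p\<bar> \<le> int N then 0 else b p))^2) \<le> \<epsilon>"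
proof -
  define f where "f = (\<lambda>i. (cmod (b i))^2)"
  define S where "S = infsum f UNIV"
  have hs: "(f has_sum S) UNIV" unfolding S_def f_def using sb by simp
  have "\<forall>\<^sub>F F in finite_subsets_at_top UNIV. dist (sum f F) S < \<epsilon>"
  proof -
    have 1: "(sum f \<longlongrightarrow> S) (finite_subsets_at_top UNIV)" using hs unfolding has_sum_def .
    show ?thesis using tendstoD[OF 1 e] .
  qed
  then have "\<exists>X. finite X \<and> X \<subseteq> UNIV \<and> (\<forall>Y. finite Y \<and> X \<subseteq> Y \<and> Y \<subseteq> UNIV \<longrightarrow> dist (sum f Y) S < \<epsilon>)"
    by (simp only: eventually_finite_subsets_at_top)
  then obtain F0 where F0: "finite F0" "\<And>F. finite F \<Longrightarrow> F0 \<subseteq> F \<Longrightarrow> dist (sum f F) S < \<epsilon>"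
    by auto
  define N where "N = nat (Max (insert 0 (abs ` F0)))"
  have inN: "\<bar>p\<bar> \<le> int N" if "p \<in> F0" for p
  proof -
    have "\<bar>p\<bar> \<le> Max (insert 0 (abs ` F0))" using F0(1) that by (intro Max_ge) auto
    then show ?thesis unfolding N_def by linarith
  qed
  have "(\<Sum>p\<in>F. (cmod (if \<bar>p\<bar> \<le> int N then 0 else b p))^2) \<le> \<epsilon>" if F: "finite F" for F
  proof -
    define G where "G = {p\<in>F. \<not> \<bar>p\<bar> \<le> int N}"
    have fG: "finite G" unfolding G_def using F by simp
    have dis: "F0 \<inter> G = {}" using inN unfolding G_def by auto
    have "(\<Sum>p\<in>F. (cmod (if \<bar>p\<bar> \<le> int N then 0 else b p))^2) = sum f G"
    proof -
      have "(\<Sum>p\<in>F. (cmod (if \<bar>p\<bar> \<le> int N then 0 else b p))^2) = (\<Sum>p\<in>F. if \<not> \<bar>p\<bar> \<le> int N then f p else 0)"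
        unfolding f_def by (intro sum.cong refl) auto
      also have "\<dots> = sum f G" unfolding G_def using F by (rule sum.inter_filter[symmetric])
      finally show ?thesis .
    qed
    also have "sum f G = sum f (F0 \<union> G) - sum f F0" using dis fG F0(1) by (simp add: sum.union_disjoint)
    also have "sum f (F0 \<union> G) \<le> S" unfolding S_def
      using sb fG F0(1) by (intro finite_sum_le_infsum) (auto simp: f_def)
    also have "S - sum f F0 < \<epsilon>" using F0(2)[of F0] F0(1) by (simp add: dist_real_def)
    finally show ?thesis by simp
  qed
  then show ?thesis by blast
qed

lemma diag_to0:
  fixes V :: "nat \<Rightarrow> nat \<Rightarrow> complex"
  assumes hyp: "\<forall>p::int. (\<lambda>n. V n (nat (int n + p))) \<longlonglongrightarrow> 0"
  shows "(\<lambda>j. V (nat (int j + q)) j) \<longlonglongrightarrow> 0"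
proof -
  define h where "h = (\<lambda>n. V n (nat (int n + (- q))))"
  have h: "h \<longlonglongrightarrow> 0" unfolding h_def using hyp by blast
  have g: "filterlim (\<lambda>j. nat (int j + q)) sequentially sequentially"
    unfolding filterlim_at_top
  proof
    fix Z :: nat
    show "\<forall>\<^sub>F j in sequentially. Z \<le> nat (int j + q)"
      by (rule eventually_sequentiallyI[of "Z + nat (- q)"]) linarith
  qed
  have "(\<lambda>j. h (nat (int j + q))) \<longlonglongrightarrow> 0"
    using filterlim_compose[OF h g] by simp
  moreover have "\<forall>\<^sub>F j in sequentially. h (nat (int j + q)) = V (nat (int j + q)) j"
  proof (rule eventually_sequentiallyI[of "nat (- q)"])
    fix j assume "nat (- q) \<le> j"
    then have "nat (int (nat (int j + q)) + - q) = j" by linarith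
    then show "h (nat (int j + q)) = V (nat (int j + q)) j" unfolding h_def by simp
  qed
  ultimately show ?thesis by (rule Lim_transform_eventually)
qed

lemma G_to0:
  fixes V :: "nat \<Rightarrow> nat \<Rightarrow> complex" and N :: nat
  assumes hyp: "\<forall>p::int. (\<lambda>n. V n (nat (int n + p))) \<longlonglongrightarrow> 0"
  shows "(\<lambda>j. \<Sum>i\<in>{j-N..j+N}. (cmod (V i j))^2) \<longlonglongrightarrow> 0"
proof -
  have "(\<lambda>j. \<Sum>q\<in>{-int N..int N}. (cmod (V (nat (int j + q)) j))^2) \<longlonglongrightarrow> (\<Sum>q\<in>{-int N..int N}. (cmod 0)^2)"
    by (intro tendsto_intros diag_to0[OF hyp])
  then have l: "(\<lambda>j. \<Sum>q\<in>{-int N..int N}. (cmod (V (nat (int j + q)) j))^2) \<longlonglongrightarrow> 0" by simp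
  have "\<forall>\<^sub>F j in sequentially. (\<Sum>q\<in>{-int N..int N}. (cmod (V (nat (int j + q)) j))^2) = (\<Sum>i\<in>{j-N..j+N}. (cmod (V i j))^2)"
  proof (rule eventually_sequentiallyI[of N])
    fix j assume jN: "N \<le> j"
    have inj: "inj_on (\<lambda>q. nat (int j + q)) {-int N..int N}"
      using jN by (auto simp: inj_on_def)
    have img: "(\<lambda>q. nat (int j + q)) ` {-int N..int N} = {j-N..j+N}"
    proof
      show "(\<lambda>q. nat (int j + q)) ` {-int N..int N} \<subseteq> {j-N..j+N}" using jN by auto
      show "{j-N..j+N} \<subseteq> (\<lambda>q. nat (int j + q)) ` {-int N..int N}"
      proof
        fix i assume "i \<in> {j-N..j+N}"
        then have "i = nat (int j + (int i - int j))" "int i - int j \<in> {-int N..int N}" using jN by auto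
        then show "i \<in> (\<lambda>q. nat (int j + q)) ` {-int N..int N}" by blast
      qed
    qed
    show "(\<Sum>q\<in>{-int N..int N}. (cmod (V (nat (int j + q)) j))^2) = (\<Sum>i\<in>{j-N..j+N}. (cmod (V i j))^2)"
      unfolding img[symmetric] by (simp add: sum.reindex[OF inj])
  qed
  with l show ?thesis by (rule Lim_transform_eventually)
qed

lemma swap_band:
  fixes h :: "nat \<Rightarrow> nat \<Rightarrow> real"
  assumes h0: "\<And>i j. h i j \<ge> 0"
  shows "(\<Sum>i<m. \<Sum>j\<in>{i-N..i+N}. h i j) \<le> (\<Sum>j<m+N. \<Sum>i\<in>{j-N..j+N}. h i j)"
proof -
  define L where "L = m + N"
  have "(\<Sum>i<m. \<Sum>j\<in>{i-N..i+N}. h i j) = (\<Sum>i<m. \<Sum>j<L. if j \<in> {i-N..i+N} then h i j else 0)"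
  proof (rule sum.cong[OF refl])
    fix i assume "i \<in> {..<m}"
    then have "{..<L} \<inter> {i-N..i+N} = {i-N..i+N}" unfolding L_def by auto
    then show "(\<Sum>j\<in>{i-N..i+N}. h i j) = (\<Sum>j<L. if j \<in> {i-N..i+N} then h i j else 0)"
      using sum.inter_restrict[of "{..<L}" "h i" "{i-N..i+N}"] by simp
  qed
  also have "\<dots> \<le> (\<Sum>i<L. \<Sum>j<L. if j \<in> {i-N..i+N} then h i j else 0)"
    by (rule sum_mono2) (auto simp: L_def h0 intro!: sum_nonneg)
  also have "\<dots> = (\<Sum>j<L. \<Sum>i<L. if i \<in> {j-N..j+N} then h i j else 0)"
    by (subst sum.swap) (intro sum.cong refl if_cong, auto)
  also have "\<dots> \<le> (\<Sum>j<L. \<Sum>i\<in>{j-N..j+N}. h i j)"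
  proof (rule sum_mono)
    fix j
    have "(\<Sum>i<L. if i \<in> {j-N..j+N} then h i j else 0) = (\<Sum>i\<in>{..<L} \<inter> {j-N..j+N}. h i j)"
      using sum.inter_restrict[of "{..<L}" "\<lambda>i. h i j" "{j-N..j+N}"] by simp
    also have "\<dots> \<le> (\<Sum>i\<in>{j-N..j+N}. h i j)" by (rule sum_mono2) (auto simp: h0)
    finally show "(\<Sum>i<L. if i \<in> {j-N..j+N} then h i j else 0) \<le> (\<Sum>i\<in>{j-N..j+N}. h i j)" .
  qed
  finally show ?thesis unfolding L_def .
qed

lemma band_to0:
  fixes V :: "nat \<Rightarrow> nat \<Rightarrow> complex" and c :: "int \<Rightarrow> complex" and z :: "nat \<Rightarrow> nat \<Rightarrow> complex"
  assumes hyp: "\<forall>p::int. (\<lambda>n. V n (nat (int n + p))) \<longlonglongrightarrow> 0"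
    and cN: "\<And>p. \<bar>p\<bar> > int N \<Longrightarrow> c p = 0"
    and cb: "\<And>p. cmod (c p) \<le> \<beta>"
    and zb: "\<And>n m. (\<Sum>j<m. (cmod (z n j))^2) \<le> M"
    and zc: "\<And>j. (\<lambda>n. z n j) \<longlonglongrightarrow> 0"
  shows "(\<lambda>n. l2norm (mat_apply (\<lambda>i j. c (int i - int j) * V i j) (z n))) \<longlonglongrightarrow> 0"
proof -
  define W where "W = (\<lambda>i j. c (int i - int j) * V i j)"
  define G where "G j = (\<Sum>i\<in>{j-N..j+N}. (cmod (V i j))^2)" for j
  define A where "A = real (2*N+1) * \<beta>^2"
  have b0: "\<beta> \<ge> 0" using cb[of 0] norm_ge_zero order_trans by blast
  have M0: "M \<ge> 0" using zb[of _ 0] by simp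
  have G0: "G j \<ge> 0" for j unfolding G_def by (simp add: sum_nonneg)
  have A0: "A \<ge> 0" unfolding A_def by simp
  have Wz: "W i j = 0" if "j \<notin> {i-N..i+N}" for i j
  proof -
    have "\<bar>int i - int j\<bar> > int N" using that by auto
    then show ?thesis unfolding W_def using cN by simp
  qed
  have app: "mat_apply W u i = (\<Sum>j\<in>{i-N..i+N}. W i j * u j)" for u i
    unfolding mat_apply_def by (rule suminf_finite) (auto simp: Wz)
  have cardI: "real (card {i-N..i+N}) \<le> real (2*N+1)" for i by simp
  have rowb: "(cmod (mat_apply W u i))^2 \<le> A * (\<Sum>j\<in>{i-N..i+N}. (cmod (V i j))^2 * (cmod (u j))^2)" for u i
  proof -
    have "cmod (mat_apply W u i) \<le> (\<Sum>j\<in>{i-N..i+N}. cmod (W i j * u j))" unfolding app by (rule norm_sum)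
    then have "(cmod (mat_apply W u i))^2 \<le> (\<Sum>j\<in>{i-N..i+N}. cmod (W i j * u j))^2" by (intro power_mono) auto
    also have "\<dots> \<le> (\<Sum>j\<in>{i-N..i+N}. (cmod (W i j * u j))^2) * card {i-N..i+N}"
      by (rule sum_squared_le_sum_of_squares)
    also have "\<dots> \<le> (\<Sum>j\<in>{i-N..i+N}. \<beta>^2 * ((cmod (V i j))^2 * (cmod (u j))^2)) * real (2*N+1)"
    proof (rule mult_mono)
      show "(\<Sum>j\<in>{i-N..i+N}. (cmod (W i j * u j))^2) \<le> (\<Sum>j\<in>{i-N..i+N}. \<beta>^2 * ((cmod (V i j))^2 * (cmod (u j))^2))"
      proof (rule sum_mono)
        fix j
        have "(cmod (c (int i - int j)))^2 \<le> \<beta>^2" using cb by (intro power_mono) auto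
        then show "(cmod (W i j * u j))^2 \<le> \<beta>^2 * ((cmod (V i j))^2 * (cmod (u j))^2)"
          unfolding W_def by (simp add: norm_mult power_mult_distrib mult.assoc mult_right_mono)
      qed
    qed (use cardI in \<open>auto intro: sum_nonneg\<close>)
    also have "\<dots> = A * (\<Sum>j\<in>{i-N..i+N}. (cmod (V i j))^2 * (cmod (u j))^2)"
      unfolding A_def by (simp add: sum_distrib_left mult_ac)
    finally show ?thesis .
  qed
  have pb: "(\<Sum>i<m. (cmod (mat_apply W u i))^2) \<le> A * (\<Sum>j<m+N. (cmod (u j))^2 * G j)" for u m
  proof -
    have "(\<Sum>i<m. (cmod (mat_apply W u i))^2) \<le> (\<Sum>i<m. A * (\<Sum>j\<in>{i-N..i+N}. (cmod (V i j))^2 * (cmod (u j))^2))"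
      by (rule sum_mono) (rule rowb)
    also have "\<dots> = A * (\<Sum>i<m. \<Sum>j\<in>{i-N..i+N}. (cmod (V i j))^2 * (cmod (u j))^2)"
      by (simp add: sum_distrib_left)
    also have "\<dots> \<le> A * (\<Sum>j<m+N. \<Sum>i\<in>{j-N..j+N}. (cmod (V i j))^2 * (cmod (u j))^2)"
      by (intro mult_left_mono swap_band A0) simp
    also have "\<dots> = A * (\<Sum>j<m+N. (cmod (u j))^2 * G j)"
      unfolding G_def by (simp add: sum_distrib_left sum_distrib_right mult_ac)
    finally show ?thesis .
  qed
  have Gl: "G \<longlonglongrightarrow> 0" unfolding G_def by (rule G_to0[OF hyp])
  define s where "s n = (\<Sum>i. (cmod (mat_apply W (z n) i))^2)" for n
  have key: "\<forall>\<^sub>F n in sequentially. summable (\<lambda>i. (cmod (mat_apply W (z n) i))^2) \<and> s n < \<epsilon>"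
    if e: "0 < \<epsilon>" for \<epsilon>
  proof -
    define \<delta> where "\<delta> = \<epsilon> / (2 * (A + 1) * (M + 1))"
    have d0: "\<delta> > 0" unfolding \<delta>_def using e A0 M0 by simp
    have "\<forall>\<^sub>F j in sequentially. G j < \<delta>" using order_tendstoD(2)[OF Gl d0] .
    then obtain J where J: "\<And>j. j \<ge> J \<Longrightarrow> G j < \<delta>" unfolding eventually_sequentially by blast
    define P where "P n = (\<Sum>j<J. (cmod (z n j))^2 * G j)" for n
    have "(\<lambda>n. A * P n) \<longlonglongrightarrow> A * (\<Sum>j<J. (cmod 0)^2 * G j)"
      unfolding P_def by (intro tendsto_intros zc)
    then have "(\<lambda>n. A * P n) \<longlonglongrightarrow> 0" by simp
    then have ev: "\<forall>\<^sub>F n in sequentially. A * P n < \<epsilon> / 2" using e by (intro order_tendstoD(2)) auto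
    have AdM: "A * \<delta> * M \<le> \<epsilon> / 2"
    proof -
      have "A * \<delta> * M \<le> (A + 1) * \<delta> * (M + 1)" using A0 M0 d0
        by (intro mult_mono) auto
      also have "\<dots> = \<epsilon> / 2"
      proof -
        define Q where "Q = (A + 1) * (M + 1)"
        have Q: "Q \<noteq> 0" unfolding Q_def using A0 M0 by auto
        have "\<delta> = \<epsilon> / (2 * Q)" unfolding \<delta>_def Q_def by (simp add: mult.assoc)
        then have "(A + 1) * \<delta> * (M + 1) = Q * (\<epsilon> / (2 * Q))" unfolding Q_def by (simp add: mult_ac)
        also have "\<dots> = \<epsilon> / 2" using Q by simp
        finally show ?thesis .
      qed
      finally show ?thesis .
    qed
    show "\<forall>\<^sub>F n in sequentially. summable (\<lambda>i. (cmod (mat_apply W (z n) i))^2) \<and> s n < \<epsilon>"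
      using ev
    proof eventually_elim
      case (elim n)
      have part: "(\<Sum>i<m. (cmod (mat_apply W (z n) i))^2) \<le> A * (P n + \<delta> * M)" for m
      proof -
        have "(\<Sum>j<m+N. (cmod (z n j))^2 * G j) \<le> (\<Sum>j<m+N. (if j < J then (cmod (z n j))^2 * G j else 0) + \<delta> * (cmod (z n j))^2)"
        proof (rule sum_mono)
          fix j
          show "(cmod (z n j))^2 * G j \<le> (if j < J then (cmod (z n j))^2 * G j else 0) + \<delta> * (cmod (z n j))^2"
          proof (cases "j < J")
            case True then show ?thesis using d0 by simp
          next
            case False
            then have "G j \<le> \<delta>" using J by (simp add: less_imp_le)
            then have "(cmod (z n j))^2 * G j \<le> (cmod (z n j))^2 * \<delta>" by (intro mult_left_mono) auto
            with False show ?thesis by (simp add: mult.commute)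
          qed
        qed
        also have "\<dots> = (\<Sum>j<m+N. if j < J then (cmod (z n j))^2 * G j else 0) + \<delta> * (\<Sum>j<m+N. (cmod (z n j))^2)"
          by (simp add: sum.distrib sum_distrib_left)
        also have "(\<Sum>j<m+N. if j < J then (cmod (z n j))^2 * G j else 0) \<le> P n"
        proof -
          have "(\<Sum>j<m+N. if j < J then (cmod (z n j))^2 * G j else 0) = (\<Sum>j\<in>{..<m+N} \<inter> {..<J}. (cmod (z n j))^2 * G j)"
            using sum.inter_restrict[of "{..<m+N}" "\<lambda>j. (cmod (z n j))^2 * G j" "{..<J}"] by simp
          also have "\<dots> \<le> P n" unfolding P_def by (rule sum_mono2) (auto simp: G0)
          finally show ?thesis .
        qed
        also have "\<delta> * (\<Sum>j<m+N. (cmod (z n j))^2) \<le> \<delta> * M" using d0 zb by (intro mult_left_mono) auto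
        finally have "(\<Sum>j<m+N. (cmod (z n j))^2 * G j) \<le> P n + \<delta> * M" by simp
        then have "A * (\<Sum>j<m+N. (cmod (z n j))^2 * G j) \<le> A * (P n + \<delta> * M)" using A0 by (rule mult_left_mono)
        with pb show ?thesis by (rule order_trans)
      qed
      have sm: "summable (\<lambda>i. (cmod (mat_apply W (z n) i))^2)"
        by (rule summableI_nonneg_bounded[where x="A * (P n + \<delta> * M)"]) (use part in auto)
      have "s n \<le> A * (P n + \<delta> * M)" unfolding s_def by (rule suminf_le_const[OF sm part])
      also have "\<dots> = A * P n + A * \<delta> * M" by (simp add: algebra_simps)
      also have "\<dots> < \<epsilon>" using elim AdM by simp
      finally show ?case using sm by simp
    qed
  qed
  have "s \<longlonglongrightarrow> 0"
  proof (rule order_tendstoI)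
    fix a :: real assume a: "a < 0"
    show "\<forall>\<^sub>F n in sequentially. a < s n"
      using key[OF zero_less_one]
    proof eventually_elim
      case (elim n)
      then have "s n \<ge> 0" unfolding s_def by (intro suminf_nonneg) auto
      with a show ?case by simp
    qed
  next
    fix \<epsilon> :: real assume "0 < \<epsilon>"
    from key[OF this] show "\<forall>\<^sub>F n in sequentially. s n < \<epsilon>" by (rule eventually_mono) simp
  qed
  then have "(\<lambda>n. sqrt (s n)) \<longlonglongrightarrow> sqrt 0" by (intro tendsto_intros)
  then show ?thesis unfolding l2norm_def s_def W_def by simp
qed

lemma diag_sub:
  fixes x :: "nat \<Rightarrow> nat \<Rightarrow> complex"
  assumes bd: "\<And>n i. cmod (x n i) \<le> M"
  shows "\<exists>r. strict_mono r \<and> (\<forall>i. convergent (\<lambda>n. x (r n) i))"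
proof -
  interpret subseqs "\<lambda>i s. convergent (\<lambda>n. x (s n) i)"
  proof
    fix i and s :: "nat \<Rightarrow> nat" assume "strict_mono s"
    have "bounded (range (\<lambda>n. x (s n) i))"
      using bd by (intro boundedI[where B=M]) auto
    then obtain l r where r: "strict_mono r" "((\<lambda>n. x (s n) i) \<circ> r) \<longlonglongrightarrow> l"
      using bounded_imp_convergent_subsequence by blast
    then have "convergent (\<lambda>n. x ((s \<circ> r) n) i)" unfolding convergent_def by (auto simp: o_def)
    with r(1) show "\<exists>r'. strict_mono r' \<and> convergent (\<lambda>n. x ((s \<circ> r') n) i)" by blast
  qed
  have "convergent (\<lambda>n. x (diagseq n) i)" for i
  proof -
    have "convergent (\<lambda>n. x ((diagseq \<circ> (+) (Suc i)) n) i)"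
    proof (rule diagseq_holds)
      fix r s n assume "strict_mono (r :: nat \<Rightarrow> nat)" "convergent (\<lambda>m. x (s m) n)"
      then show "convergent (\<lambda>m. x ((s \<circ> r) m) n)"
        using convergent_subseq_convergent[of "\<lambda>m. x (s m) n" r] by (simp add: o_def)
    qed
    then have "convergent (\<lambda>n. x (diagseq (n + Suc i)) i)" by (simp add: o_def add.commute)
    then show ?thesis by (rule convergent_ignore_initial_segment[THEN iffD1])
  qed
  with subseq_diagseq show ?thesis by blast
qed

lemma l2_add:
  assumes a: "is_l2 a" and b: "is_l2 b"
  shows "is_l2 (\<lambda>i. a i + b i) \<and> l2norm (\<lambda>i. a i + b i) \<le> l2norm a + l2norm b"
proof (rule L2_from_partial)
  show "0 \<le> l2norm a + l2norm b" using l2norm_nonneg[OF a] l2norm_nonneg[OF b] by simp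
  fix n
  have "L2_set (\<lambda>i. cmod (a i + b i)) {..<n} \<le> L2_set (\<lambda>i. cmod (a i) + cmod (b i)) {..<n}"
    by (rule L2_set_mono) (auto simp: norm_triangle_ineq)
  also have "\<dots> \<le> L2_set (\<lambda>i. cmod (a i)) {..<n} + L2_set (\<lambda>i. cmod (b i)) {..<n}"
    by (rule L2_set_triangle_ineq)
  also have "\<dots> \<le> l2norm a + l2norm b" by (intro add_mono L2_partial_le a b)
  finally show "L2_set (\<lambda>i. cmod (a i + b i)) {..<n} \<le> l2norm a + l2norm b" .
qed

theorem lemma2:
  fixes V :: "nat \<Rightarrow> nat \<Rightarrow> complex" and b :: "int \<Rightarrow> complex"
  assumes "bounded_matrix V"
    and "\<not> compact_matrix V"
    and "\<forall>p::int. (\<lambda>n. V n (nat (int n + p))) \<longlonglongrightarrow> 0"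
    and "(\<lambda>i. (cmod (b i))^2) summable_on UNIV"
  shows "bounded_matrix (\<lambda>i j. b (int i - int j) * V i j) \<and>
         compact_matrix (\<lambda>i j. b (int i - int j) * V i j)"
proof -
  note hyp = assms(3) and sb = assms(4)
  from assms(1) obtain C where HV: "\<forall>x. is_l2 x \<longrightarrow> (\<forall>i. summable (\<lambda>j. V i j * x j)) \<and> is_l2 (mat_apply V x) \<and>
        l2norm (mat_apply V x) \<le> C * l2norm x" unfolding bounded_matrix_def by blast
  have C: "C \<ge> 0" by (rule C_nonneg[OF HV])
  define K where "K = (\<lambda>i j. b (int i - int j) * V i j)"
  define S where "S = infsum (\<lambda>i. (cmod (b i))^2) UNIV"
  define B0 where "B0 = sqrt S"
  have S0: "S \<ge> 0" unfolding S_def by (rule infsum_nonneg) simp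
  have B0: "B0 \<ge> 0" unfolding B0_def using S0 by simp
  have bB: "(\<Sum>p\<in>F. (cmod (b p))^2) \<le> B0^2" if "finite F" for F
  proof -
    have "(\<Sum>p\<in>F. (cmod (b p))^2) \<le> S" unfolding S_def
      using sb that by (intro finite_sum_le_infsum) auto
    then show ?thesis unfolding B0_def using S0 by simp
  qed
  have Kb: "(\<forall>i. summable (\<lambda>j. K i j * x j)) \<and> is_l2 (mat_apply K x) \<and> l2norm (mat_apply K x) \<le> C * B0 * l2norm x"
    if "is_l2 x" for x
    using mult_bounded[OF HV B0 bB that] unfolding K_def by simp
  have bounded: "bounded_matrix K" unfolding bounded_matrix_def using Kb by blast
  have compact: "compact_matrix K"
    unfolding compact_matrix_def
  proof (intro allI impI)
    fix x :: "nat \<Rightarrow> nat \<Rightarrow> complex"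
    assume "(\<forall>n. is_l2 (x n)) \<and> (\<exists>M. \<forall>n. l2norm (x n) \<le> M)"
    then obtain M where xl2: "\<And>n. is_l2 (x n)" and xM: "\<And>n. l2norm (x n) \<le> M" by blast
    have M0: "M \<ge> 0" using xM[of 0] l2norm_nonneg[OF xl2[of 0]] by linarith
    have coord: "cmod (x n i) \<le> M" for n i
      using coord_le_l2norm[OF xl2[of n], of i] xM[of n] by linarith
    obtain r where r: "strict_mono r" "\<And>i. convergent (\<lambda>n. x (r n) i)"
      using diag_sub[of x M] coord by blast
    define x0 where "x0 i = lim (\<lambda>n. x (r n) i)" for i
    have x0l: "(\<lambda>n. x (r n) i) \<longlonglongrightarrow> x0 i" for i
      unfolding x0_def using r(2) convergent_LIMSEQ_iff by blast
    have x0b: "is_l2 x0 \<and> l2norm x0 \<le> M"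
    proof (rule L2_from_partial[OF M0])
      fix m
      have "(\<lambda>n. L2_set (\<lambda>i. cmod (x (r n) i)) {..<m}) \<longlonglongrightarrow> L2_set (\<lambda>i. cmod (x0 i)) {..<m}"
        unfolding L2_set_def by (intro tendsto_intros x0l)
      moreover have "\<forall>\<^sub>F n in sequentially. L2_set (\<lambda>i. cmod (x (r n) i)) {..<m} \<le> M"
        using L2_partial_le[OF xl2] xM order_trans by (intro always_eventually allI) blast
      ultimately show "L2_set (\<lambda>i. cmod (x0 i)) {..<m} \<le> M"
        by (rule tendsto_upperbound) simp
    qed
    define z where "z n i = x (r n) i - x0 i" for n i
    have zL: "L2_set (\<lambda>j. cmod (z n j)) {..<m} \<le> 2 * M" for n m
    proof -
      have "L2_set (\<lambda>j. cmod (z n j)) {..<m} \<le> L2_set (\<lambda>j. cmod (x (r n) j) + cmod (x0 j)) {..<m}"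
        unfolding z_def by (rule L2_set_mono) (auto simp: norm_triangle_ineq4)
      also have "\<dots> \<le> L2_set (\<lambda>j. cmod (x (r n) j)) {..<m} + L2_set (\<lambda>j. cmod (x0 j)) {..<m}"
        by (rule L2_set_triangle_ineq)
      also have "\<dots> \<le> M + M" using L2_partial_le[OF xl2] xM L2_partial_le x0b
        by (intro add_mono) (blast intro: order_trans)+
      finally show ?thesis by simp
    qed
    have zl2: "is_l2 (z n) \<and> l2norm (z n) \<le> 2 * M" for n
      by (rule L2_from_partial) (use M0 zL in auto)
    have zb: "(\<Sum>j<m. (cmod (z n j))^2) \<le> (2 * M)^2" for n m
    proof -
      have "sqrt (\<Sum>j<m. (cmod (z n j))^2) \<le> 2 * M" using zL[of n m] unfolding L2_set_def .
      then show ?thesis using M0 real_sqrt_le_iff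
        by (metis real_sqrt_le_mono real_sqrt_pow2 sum_nonneg zero_le_power2 power_mono real_sqrt_ge_zero)
    qed
    have zc: "(\<lambda>n. z n j) \<longlonglongrightarrow> 0" for j
    proof -
      have "(\<lambda>n. x (r n) j - x0 j) \<longlonglongrightarrow> x0 j - x0 j" by (intro tendsto_intros x0l)
      then show ?thesis unfolding z_def by simp
    qed
    define y where "y = mat_apply K x0"
    have yl2: "is_l2 y" unfolding y_def using Kb x0b by blast
    have dif: "(\<lambda>i. mat_apply K (x (r n)) i - y i) = mat_apply K (z n)" for n
    proof
      fix i
      have s1: "summable (\<lambda>j. K i j * x (r n) j)" using Kb xl2 by blast
      have s2: "summable (\<lambda>j. K i j * x0 j)" using Kb x0b by blast
      have "mat_apply K (x (r n)) i - y i = (\<Sum>j. K i j * x (r n) j - K i j * x0 j)"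
        unfolding y_def mat_apply_def using suminf_diff[OF s1 s2] by simp
      also have "\<dots> = mat_apply K (z n) i" unfolding mat_apply_def z_def by (simp add: right_diff_distrib)
      finally show "mat_apply K (x (r n)) i - y i = mat_apply K (z n) i" .
    qed
    have conv: "(\<lambda>n. l2norm (mat_apply K (z n))) \<longlonglongrightarrow> 0"
    proof (rule order_tendstoI)
      fix a :: real assume "a < 0"
      then show "\<forall>\<^sub>F n in sequentially. a < l2norm (mat_apply K (z n))"
        using Kb zl2 l2norm_nonneg by (intro always_eventually allI) (meson le_less_trans not_le)
    next
      fix \<epsilon> :: real assume e: "0 < \<epsilon>"
      define Bt where "Bt = \<epsilon> / (2 * (C + 1) * (2 * M + 1))"
      have Bt0: "Bt > 0" unfolding Bt_def using e C M0 by simp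
      obtain N :: nat where N: "\<And>F. finite F \<Longrightarrow> (\<Sum>p\<in>F. (cmod (if \<bar>p\<bar> \<le> int N then 0 else b p))^2) \<le> Bt^2"
        using tail[OF sb, of "Bt^2"] Bt0 by auto
      define bN where "bN p = (if \<bar>p\<bar> \<le> int N then b p else 0)" for p
      define bR where "bR p = (if \<bar>p\<bar> \<le> int N then 0 else b p)" for p
      have bNB: "(\<Sum>p\<in>F. (cmod (bN p))^2) \<le> B0^2" if "finite F" for F
      proof -
        have "(\<Sum>p\<in>F. (cmod (bN p))^2) \<le> (\<Sum>p\<in>F. (cmod (b p))^2)"
          by (rule sum_mono) (auto simp: bN_def)
        with bB[OF that] show ?thesis by linarith
      qed
      have bRB: "(\<Sum>p\<in>F. (cmod (bR p))^2) \<le> Bt^2" if "finite F" for F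
        using N[OF that] unfolding bR_def .
      have bNc: "cmod (bN p) \<le> B0" for p
      proof -
        have "(cmod (bN p))^2 \<le> B0^2" using bNB[of "{p}"] by simp
        then show ?thesis using B0 by (rule power2_le_imp_le)
      qed
      define KN where "KN = (\<lambda>i j. bN (int i - int j) * V i j)"
      define KR where "KR = (\<lambda>i j. bR (int i - int j) * V i j)"
      have KNb: "(\<forall>i. summable (\<lambda>j. bN (int i - int j) * V i j * u j)) \<and> is_l2 (mat_apply KN u)"
        if "is_l2 u" for u
        using mult_bounded[OF HV B0 bNB that] unfolding KN_def by simp
      have KRb: "(\<forall>i. summable (\<lambda>j. bR (int i - int j) * V i j * u j)) \<and> is_l2 (mat_apply KR u) \<and>
          l2norm (mat_apply KR u) \<le> C * Bt * l2norm u"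
        if "is_l2 u" for u
        using mult_bounded[OF HV less_imp_le[OF Bt0] bRB that] unfolding KR_def by simp
      have split: "mat_apply K (z n) = (\<lambda>i. mat_apply KN (z n) i + mat_apply KR (z n) i)" for n
      proof
        fix i
        have s1: "summable (\<lambda>j. bN (int i - int j) * V i j * z n j)" using KNb zl2 by blast
        have s2: "summable (\<lambda>j. bR (int i - int j) * V i j * z n j)" using KRb zl2 by blast
        have "mat_apply KN (z n) i + mat_apply KR (z n) i
            = (\<Sum>j. bN (int i - int j) * V i j * z n j + bR (int i - int j) * V i j * z n j)"
          unfolding mat_apply_def KN_def KR_def using suminf_add[OF s1 s2] by simp
        also have "\<dots> = mat_apply K (z n) i"
          unfolding mat_apply_def K_def bN_def bR_def by (intro suminf_cong) (simp add: algebra_simps)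
        finally show "mat_apply K (z n) i = mat_apply KN (z n) i + mat_apply KR (z n) i" by simp
      qed
      have lN: "(\<lambda>n. l2norm (mat_apply KN (z n))) \<longlonglongrightarrow> 0"
        unfolding KN_def
      proof (rule band_to0[OF hyp, where N=N and \<beta>=B0 and M="(2*M)^2"])
        show "bN p = 0" if "int N < \<bar>p\<bar>" for p using that unfolding bN_def by simp
      qed (use bNc zb zc in auto)
      then have ev: "\<forall>\<^sub>F n in sequentially. l2norm (mat_apply KN (z n)) < \<epsilon> / 2"
        using e by (intro order_tendstoD(2)) auto
      have small: "C * Bt * (2 * M) \<le> \<epsilon> / 2"
      proof -
        have "C * Bt * (2 * M) \<le> (C + 1) * Bt * (2 * M + 1)" using C Bt0 M0
          by (intro mult_mono) auto
        also have "\<dots> = \<epsilon> / 2"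
        proof -
          define Q where "Q = (C + 1) * (2 * M + 1)"
          have Q: "Q \<noteq> 0" unfolding Q_def using C M0 by auto
          have "Bt = \<epsilon> / (2 * Q)" unfolding Bt_def Q_def by (simp add: mult.assoc)
          then have "(C + 1) * Bt * (2 * M + 1) = Q * (\<epsilon> / (2 * Q))" unfolding Q_def by (simp add: mult_ac)
          also have "\<dots> = \<epsilon> / 2" using Q by simp
          finally show ?thesis .
        qed
        finally show ?thesis .
      qed
      show "\<forall>\<^sub>F n in sequentially. l2norm (mat_apply K (z n)) < \<epsilon>"
        using ev
      proof eventually_elim
        case (elim n)
        have a: "is_l2 (mat_apply KN (z n))" using KNb zl2 by blast
        have b: "is_l2 (mat_apply KR (z n))" using KRb zl2 by blast
        have "l2norm (mat_apply K (z n)) \<le> l2norm (mat_apply KN (z n)) + l2norm (mat_apply KR (z n))"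
          unfolding split using l2_add[OF a b] by simp
        also have "l2norm (mat_apply KR (z n)) \<le> C * Bt * l2norm (z n)" using KRb zl2 by blast
        also have "\<dots> \<le> C * Bt * (2 * M)" using zl2 C Bt0 by (intro mult_left_mono) auto
        finally show ?case using elim small by linarith
      qed
    qed
    show "\<exists>r y. strict_mono r \<and> is_l2 y \<and> (\<lambda>n. l2norm (\<lambda>i. mat_apply K (x (r n)) i - y i)) \<longlonglongrightarrow> 0"
    proof (intro exI[of _ r] exI[of _ y] conjI)
      show "(\<lambda>n. l2norm (\<lambda>i. mat_apply K (x (r n)) i - y i)) \<longlonglongrightarrow> 0"
        using conv by (simp only: dif)
    qed (use r(1) yl2 in auto)
  qed
  show ?thesis using bounded compact unfolding K_def by simp
qed

end
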